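(* Let $n$ be a nonnegative integer and let $x,y$ be complex numbers such that no denominator below vanishes. Then \[ \sum_{k=0}^{n}(-1)^k\binom{n}{k}\frac{\binom{2x+k}{k}\binom{2y+k}{k}}{\binom{2x+n+k}{k}\binom{2x-2y+k}{k}} \frac{1+2x+2k}{1+2x+n+k}H_{k}(x) =\frac{1}{2}\frac{\binom{2x+n}{n}\binom{x-2y-1+n}{n}}{\binom{x+n}{n}\binom{2x-2y+n}{n}}\big\{H_n(x)-H_{n}(x-2y-1)\big\}. \]
   Context: For complex $z$ and a nonnegative integer $k$, $\binom{z}{k}=\frac{z(z-1)\cdots(z-k+1)}{k!}$ (with $\binom{z}{0}=1$). For complex $x$ and nonnegative integer $m$, $H_0(x)=0$ and $H_m(x)=\sum_{j=1}^m\frac{1}{x+j}$ for $m\ge1$. The parameters are assumed to be such that all denominators are nonzero. *)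

theory Defs
  imports Complex_Main
begin

definition H :: "nat \<Rightarrow> complex \<Rightarrow> complex" where
  "H m x = (\<Sum>j=1..m. 1 / (x + of_nat j))"

end

theory Submission
  imports Defs
begin

definition Phi :: "complex \<Rightarrow> complex \<Rightarrow> nat \<Rightarrow> complex" where
 "Phi x y k = (-1)^k * pochhammer (2*x+1) k * pochhammer (2*y+1) k / (pochhammer (2*x-2*y+1) k * fact k)"

definition Dt :: "complex \<Rightarrow> complex \<Rightarrow> nat \<Rightarrow> nat \<Rightarrow> complex" where
 "Dt x y n k = Phi x y k * of_nat (Suc n choose k) * fact k / ((of_nat n + 1) * pochhammer (2*x + of_nat n + 1) (Suc k))"

definition Cn :: "complex \<Rightarrow> complex \<Rightarrow> nat \<Rightarrow> complex" where
 "Cn x y n = pochhammer (2*x+1) n * pochhammer (x-2*y) n / (pochhammer (x+1) n * pochhammer (2*x-2*y+1) n)"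

definition gen :: "complex \<Rightarrow> complex \<Rightarrow> nat \<Rightarrow> bool" where
 "gen x y M = (\<forall>j\<le>M. 2*x + of_nat j \<noteq> 0 \<and> x + of_nat j \<noteq> 0 \<and> x - 2*y + of_nat j \<noteq> 0
     \<and> 2*x - 2*y + of_nat j \<noteq> 0 \<and> 2*y + of_nat j \<noteq> 0)"

lemma poch_nz: "(\<And>i. i < k \<Longrightarrow> a + of_nat i \<noteq> (0::complex)) \<Longrightarrow> pochhammer a k \<noteq> 0"
  by (auto simp: pochhammer_eq_0_iff eq_neg_iff_add_eq_0)

lemma binom_shift: "of_nat (m choose Suc k) * (of_nat k + 1) = of_nat (m choose k) * (of_nat m - of_nat k :: complex)"
proof (cases "k \<le> m")
  case True
  have "Suc k * (m choose Suc k) = (m - k) * (m choose k)"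
    using binomial_absorption[of k m] binomial_absorb_comp[of m k] by simp
  then have "(of_nat (Suc k * (m choose Suc k)) :: complex) = of_nat ((m - k) * (m choose k))" by simp
  then show ?thesis using True by (simp add: of_nat_diff algebra_simps)
next
  case False
  then show ?thesis by (simp add: binomial_eq_0)
qed

lemma genD: assumes "gen x y M" "j \<le> M"
  shows "2*x + of_nat j \<noteq> 0" "x + of_nat j \<noteq> 0" "x - 2*y + of_nat j \<noteq> 0"
     "2*x - 2*y + of_nat j \<noteq> 0" "2*y + of_nat j \<noteq> 0"
  using assms unfolding gen_def by auto

lemma pz: assumes g: "gen x y M" and mk: "m + k \<le> Suc M"
  shows "pochhammer (2*x + of_nat m) k \<noteq> 0" "pochhammer (x + of_nat m) k \<noteq> 0"
    "pochhammer (x - 2*y + of_nat m) k \<noteq> 0" "pochhammer (2*x - 2*y + of_nat m) k \<noteq> 0"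
    "pochhammer (2*y + of_nat m) k \<noteq> 0"
proof -
  have "\<And>i. i < k \<Longrightarrow> m + i \<le> M" using mk by auto
  note G = genD[OF g this]
  show "pochhammer (2*x + of_nat m) k \<noteq> 0" by (intro poch_nz) (use G(1) in \<open>simp add: add.assoc\<close>)
  show "pochhammer (x + of_nat m) k \<noteq> 0" by (intro poch_nz) (use G(2) in \<open>simp add: add.assoc\<close>)
  show "pochhammer (x - 2*y + of_nat m) k \<noteq> 0" by (intro poch_nz) (use G(3) in \<open>simp add: add.assoc\<close>)
  show "pochhammer (2*x - 2*y + of_nat m) k \<noteq> 0" by (intro poch_nz) (use G(4) in \<open>simp add: add.assoc\<close>)
  show "pochhammer (2*y + of_nat m) k \<noteq> 0" by (intro poch_nz) (use G(5) in \<open>simp add: add.assoc\<close>)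
qed

lemma nz1: "(of_nat k + 1 :: complex) \<noteq> 0"
proof -
  have "(of_nat (Suc k)::complex) \<noteq> 0" by (simp only: of_nat_eq_0_iff)
  then show ?thesis by (metis add.commute of_nat_Suc)
qed

lemma gch: "(a + of_nat k) gchoose k = pochhammer (a+1) k / (fact k :: complex)"
  by (simp add: gbinomial_pochhammer')

lemma Phi_Suc:
  assumes g: "gen x y M" and kM: "k + 1 \<le> M"
  shows "Phi x y (Suc k) = Phi x y k * (-(2*x+1+of_nat k)*(2*y+1+of_nat k))
     / ((2*x-2*y+1+of_nat k)*(of_nat k + 1))"
proof -
  have n1: "2*x-2*y+1+of_nat k \<noteq> 0" using genD(4)[OF g, of "Suc k"] kM by (simp add: algebra_simps)
  have n3: "pochhammer (2*x-2*y+1) k \<noteq> 0" 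
    using pz(4)[OF g, of 1 k] kM by simp
  have n5: "(of_nat k + 1::complex) \<noteq> 0" by (rule nz1)
  have f: "(fact k :: complex) \<noteq> 0" by simp
  show ?thesis
    unfolding Phi_def pochhammer_Suc fact_Suc power_Suc
    using n1 n3 n5 f by (simp add: field_simps)
qed

lemma Dt_Suc:
  assumes g: "gen x y M" and kM: "n + k + 2 \<le> M"
  shows "Dt x y n (Suc k) = Dt x y n k * (-(2*x+1+of_nat k)*(2*y+1+of_nat k)*(of_nat n + 1 - of_nat k))
     / ((2*x-2*y+1+of_nat k)*(of_nat k + 1)*(2*x+of_nat n + of_nat k+2))"
proof -
  have b: "of_nat (Suc n choose Suc k) * fact (Suc k) = of_nat (Suc n choose k) * fact k * (of_nat n + 1 - of_nat k :: complex)"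
  proof -
    have b0: "of_nat (Suc n choose Suc k) * (of_nat k + 1) = of_nat (Suc n choose k) * (of_nat n + 1 - of_nat k :: complex)"
      using binom_shift[of "Suc n" k] by simp
    have fs: "(fact (Suc k)::complex) = (of_nat k + 1) * fact k" by (metis fact_Suc of_nat_Suc add.commute)
    show ?thesis using arg_cong[OF b0, of "\<lambda>z. z * fact k"] unfolding fs by (simp only: mult_ac)
  qed
  have n1: "2*x-2*y+1+of_nat k \<noteq> 0" using genD(4)[OF g, of "Suc k"] kM by (simp add: algebra_simps)
  have n2: "2*x+of_nat n + of_nat k+2 \<noteq> 0" using genD(1)[OF g, of "n+k+2"] kM by (simp add: algebra_simps)
  have n4: "pochhammer (2*x + of_nat n + 1) (Suc k) \<noteq> 0" 
  proof -
    have e: "2*x + of_nat n + 1 = 2*x + of_nat (n+1)" by simp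
    show ?thesis unfolding e by (rule pz(1)[OF g]) (use kM in simp)
  qed
  have n5: "(of_nat k + 1::complex) \<noteq> 0" "(of_nat n + 1::complex) \<noteq> 0" by (rule nz1)+
  have kM': "k + 1 \<le> M" using kM by simp
  have ps: "pochhammer (2*x + of_nat n + 1) (Suc (Suc k)) = pochhammer (2*x + of_nat n + 1) (Suc k) * (2*x+of_nat n + of_nat k+2)"
    by (simp add: pochhammer_Suc algebra_simps)
  have "Dt x y n (Suc k) = Phi x y (Suc k) * (of_nat (Suc n choose Suc k) * fact (Suc k)) / ((of_nat n + 1) * pochhammer (2*x + of_nat n + 1) (Suc (Suc k)))"
    unfolding Dt_def by simp
  also have "\<dots> = Phi x y k * (-(2*x+1+of_nat k)*(2*y+1+of_nat k))
     / ((2*x-2*y+1+of_nat k)*(of_nat k + 1)) * (of_nat (Suc n choose k) * fact k * (of_nat n + 1 - of_nat k)) / ((of_nat n + 1) * (pochhammer (2*x + of_nat n + 1) (Suc k) * (2*x+of_nat n + of_nat k+2)))"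
    using kM by (simp only: Phi_Suc[OF g kM'] b ps)
  also have "\<dots> = Dt x y n k * (-(2*x+1+of_nat k)*(2*y+1+of_nat k)*(of_nat n + 1 - of_nat k))
     / ((2*x-2*y+1+of_nat k)*(of_nat k + 1)*(2*x+of_nat n + of_nat k+2))"
    unfolding Dt_def using n1 n2 n4 n5 by (simp add: field_simps)
  finally show ?thesis .
qed
lemma binom_comp: "of_nat (Suc m choose k) * (of_nat m + 1 - of_nat k) = (of_nat m + 1) * (of_nat (m choose k) :: complex)"
proof (cases "k \<le> Suc m")
  case True
  have "(Suc m - k) * (Suc m choose k) = Suc m * (m choose k)"
    using binomial_absorb_comp[of "Suc m" k] by simp
  then have "(of_nat (Suc m - k)::complex) * of_nat (Suc m choose k) = of_nat (Suc m) * of_nat (m choose k)"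
    by (simp only: of_nat_mult[symmetric])
  moreover have "(of_nat (Suc m - k)::complex) = of_nat m + 1 - of_nat k" using True by (simp add: of_nat_diff)
  ultimately show ?thesis by (metis mult.commute of_nat_Suc add.commute)
next
  case False
  then show ?thesis by (simp add: binomial_eq_0)
qed

lemma Dt_n_Suc:
  assumes g: "gen x y M" and kM: "n + k + 2 \<le> M"
  shows "Dt x y (Suc n) k * (of_nat (Suc n) + 1 - of_nat k) = Dt x y n k * (of_nat n + 1)*(2*x+of_nat n+1)/(2*x+of_nat n+of_nat k+2)"
proof -
  have n2: "2*x+of_nat n + of_nat k+2 \<noteq> 0" using genD(1)[OF g, of "n+k+2"] kM by (simp add: algebra_simps)
  have n1: "2*x+of_nat n + 1 \<noteq> 0" using genD(1)[OF g, of "n+1"] kM by (simp add: algebra_simps)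
  have n4: "pochhammer (2*x + of_nat n + 2) k \<noteq> 0" 
  proof -
    have e: "2*x + of_nat n + 2 = 2*x + of_nat (n+2)" by simp
    show ?thesis unfolding e by (rule pz(1)[OF g]) (use kM in simp)
  qed
  have n5: "(of_nat n + 1::complex) \<noteq> 0" "(of_nat (Suc n) + 1::complex) \<noteq> 0" by (rule nz1)+
  have b: "of_nat (Suc (Suc n) choose k) * (of_nat (Suc n) + 1 - of_nat k) = (of_nat (Suc n) + 1) * (of_nat (Suc n choose k) :: complex)"
    by (rule binom_comp)
  have p1: "pochhammer (2*x + of_nat n + 1) (Suc k) = (2*x + of_nat n + 1) * pochhammer (2*x + of_nat n + 2) k"
    by (simp add: pochhammer_rec algebra_simps)
  have p2: "pochhammer (2*x + of_nat (Suc n) + 1) (Suc k) = pochhammer (2*x + of_nat n + 2) k * (2*x+of_nat n + of_nat k+2)"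
    by (simp add: pochhammer_Suc algebra_simps)
  have "Dt x y (Suc n) k * (of_nat (Suc n) + 1 - of_nat k) = Phi x y k * (of_nat (Suc (Suc n) choose k) * (of_nat (Suc n) + 1 - of_nat k)) * fact k / ((of_nat (Suc n) + 1) * pochhammer (2*x + of_nat (Suc n) + 1) (Suc k))"
    unfolding Dt_def by (simp add: mult_ac)
  also have "\<dots> = Phi x y k * ((of_nat (Suc n) + 1) * (of_nat (Suc n choose k))) * fact k / ((of_nat (Suc n) + 1) * (pochhammer (2*x + of_nat n + 2) k * (2*x+of_nat n + of_nat k+2)))"
    by (simp only: b p2)
  also have "\<dots> = Dt x y n k * (of_nat n + 1)*(2*x+of_nat n+1)/(2*x+of_nat n+of_nat k+2)"
    unfolding Dt_def p1 using n1 n2 n4 n5 apply (simp add: divide_simps)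
    done
  finally show ?thesis .
qed

lemma Cn_Suc:
  assumes g: "gen x y M" and kM: "n + 2 \<le> M"
  shows "Cn x y (Suc n) = Cn x y n * ((2*x+1+of_nat n)*(x-2*y+of_nat n)) / ((x+1+of_nat n)*(2*x-2*y+1+of_nat n))"
proof -
  have n1: "x+1+of_nat n \<noteq> 0" using genD(2)[OF g, of "n+1"] kM by (simp add: algebra_simps)
  have n2: "2*x-2*y+1+of_nat n \<noteq> 0" using genD(4)[OF g, of "n+1"] kM by (simp add: algebra_simps)
  have n3: "pochhammer (x+1) n \<noteq> 0" using pz(2)[OF g, of 1 n] kM by simp
  have n4: "pochhammer (2*x-2*y+1) n \<noteq> 0" using pz(4)[OF g, of 1 n] kM by simp
  show ?thesis unfolding Cn_def pochhammer_Suc using n1 n2 n3 n4 by (simp add: field_simps)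
qed

lemma Cn_nz:
  assumes g: "gen x y M" and kM: "n + 2 \<le> M"
  shows "Cn x y n \<noteq> 0"
proof -
  have n3: "pochhammer (x+1) n \<noteq> 0" using pz(2)[OF g, of 1 n] kM by simp
  have n4: "pochhammer (2*x-2*y+1) n \<noteq> 0" using pz(4)[OF g, of 1 n] kM by simp
  have n5: "pochhammer (2*x+1) n \<noteq> 0" using pz(1)[OF g, of 1 n] kM by simp
  have n6: "pochhammer (x-2*y) n \<noteq> 0" using pz(3)[OF g, of 0 n] kM by simp
  show ?thesis unfolding Cn_def using n3 n4 n5 n6 by simp
qed

definition FF :: "complex \<Rightarrow> complex \<Rightarrow> nat \<Rightarrow> nat \<Rightarrow> complex" where
 "FF x y n k = Dt x y n k * (of_nat n + 1 - of_nat k) * (1 + 2*x + 2*of_nat k) / Cn x y n"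

definition GG :: "complex \<Rightarrow> complex \<Rightarrow> nat \<Rightarrow> nat \<Rightarrow> complex" where
 "GG x y n k = -(of_nat k*(of_nat k + x)*(of_nat k + 2*x-2*y))/(x-2*y+of_nat n) * Dt x y n k / Cn x y n"

lemma rat1:
  fixes x y N K :: complex
  assumes "2*x+N+K+2 \<noteq> 0" "2*x+1+N \<noteq> 0" "x-2*y+N \<noteq> 0" "2*x-2*y+1+K \<noteq> 0" "K+1 \<noteq> 0"
  shows "(N+1)*(2*x+N+1)*(1+2*x+2*K)/(2*x+N+K+2) * ((x+1+N)*(2*x-2*y+1+N))/((2*x+1+N)*(x-2*y+N))
     - (N+1-K)*(1+2*x+2*K)
   = -((K+1)*(K+1+x)*(K+1+2*x-2*y))/(x-2*y+N) * ((-(2*x+1+K)*(2*y+1+K)*(N+1-K))/((2*x-2*y+1+K)*(K+1)*(2*x+N+K+2)))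
     + (K*(K+x)*(K+2*x-2*y))/(x-2*y+N)"
  using assms
  apply (simp add: divide_simps)
  apply (simp add: algebra_simps)
  done

lemma WZ1:
  assumes g: "gen x y M" and kM: "n + k + 3 \<le> M"
  shows "FF x y (Suc n) k - FF x y n k = GG x y n (Suc k) - GG x y n k"
proof -
  have n2: "2*x+of_nat n + of_nat k+2 \<noteq> 0" using genD(1)[OF g, of "n+k+2"] kM by (simp add: algebra_simps)
  have n1: "2*x+1+of_nat n \<noteq> 0" using genD(1)[OF g, of "n+1"] kM by (simp add: algebra_simps)
  have n3: "x+1+of_nat n \<noteq> 0" using genD(2)[OF g, of "n+1"] kM by (simp add: algebra_simps)
  have n4: "2*x-2*y+1+of_nat n \<noteq> 0" using genD(4)[OF g, of "n+1"] kM by (simp add: algebra_simps)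
  have n5: "x-2*y+of_nat n \<noteq> 0" using genD(3)[OF g, of "n"] kM by (simp add: algebra_simps)
  have n6: "2*x-2*y+1+of_nat k \<noteq> 0" using genD(4)[OF g, of "Suc k"] kM by (simp add: algebra_simps)
  have n7: "(of_nat k + 1::complex) \<noteq> 0" by (rule nz1)
  have c: "Cn x y n \<noteq> 0" by (rule Cn_nz[OF g]) (use kM in simp)
  have kM': "n + 2 \<le> M" using kM by simp
  define D where "D = Dt x y n k / Cn x y n"
  define N where "N = (of_nat n :: complex)"
  define K where "K = (of_nat k :: complex)"
  have q1: "FF x y (Suc n) k = D * ((N+1)*(2*x+N+1)*(1+2*x+2*K)/(2*x+N+K+2) * ((x+1+N)*(2*x-2*y+1+N))/((2*x+1+N)*(x-2*y+N)))"
  proof -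
    have kM2: "n + k + 2 \<le> M" using kM by simp
    have "FF x y (Suc n) k = (Dt x y (Suc n) k * (of_nat (Suc n) + 1 - of_nat k)) * (1 + 2*x + 2*of_nat k) / Cn x y (Suc n)"
      unfolding FF_def by simp
    also have "\<dots> = (Dt x y n k * (of_nat n + 1)*(2*x+of_nat n+1)/(2*x+of_nat n+of_nat k+2)) * (1 + 2*x + 2*of_nat k) / 
       (Cn x y n * ((2*x+1+of_nat n)*(x-2*y+of_nat n)) / ((x+1+of_nat n)*(2*x-2*y+1+of_nat n)))"
      by (simp only: Dt_n_Suc[OF g kM2] Cn_Suc[OF g kM'])
    also have "\<dots> = D * ((N+1)*(2*x+N+1)*(1+2*x+2*K)/(2*x+N+K+2) * ((x+1+N)*(2*x-2*y+1+N))/((2*x+1+N)*(x-2*y+N)))" 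
      unfolding D_def N_def K_def using n1 n2 n3 n4 n5 c by (simp add: divide_simps ac_simps)
    finally show ?thesis .
  qed
  have q2: "FF x y n k = D * ((N+1-K)*(1+2*x+2*K))"
    unfolding FF_def D_def N_def K_def by (simp add: ac_simps)
  have q3: "GG x y n (Suc k) = D * (-((K+1)*(K+1+x)*(K+1+2*x-2*y))/(x-2*y+N) * ((-(2*x+1+K)*(2*y+1+K)*(N+1-K))/((2*x-2*y+1+K)*(K+1)*(2*x+N+K+2))))"
  proof -
    have kM2: "n + k + 2 \<le> M" using kM by simp
    show ?thesis unfolding GG_def Dt_Suc[OF g kM2] unfolding D_def N_def K_def
      using n2 n5 n6 n7 c by (simp add: divide_simps ac_simps)
  qed
  have q4: "GG x y n k = D * (-(K*(K+x)*(K+2*x-2*y))/(x-2*y+N))"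
    unfolding GG_def D_def N_def K_def by (simp add: ac_simps)
  have r: "(N+1)*(2*x+N+1)*(1+2*x+2*K)/(2*x+N+K+2) * ((x+1+N)*(2*x-2*y+1+N))/((2*x+1+N)*(x-2*y+N))
     - (N+1-K)*(1+2*x+2*K)
   = -((K+1)*(K+1+x)*(K+1+2*x-2*y))/(x-2*y+N) * ((-(2*x+1+K)*(2*y+1+K)*(N+1-K))/((2*x-2*y+1+K)*(K+1)*(2*x+N+K+2)))
     - (-(K*(K+x)*(K+2*x-2*y))/(x-2*y+N))"
    using rat1[of x N K y] n1 n2 n5 n6 n7 unfolding N_def K_def by (simp add: ac_simps)
  show ?thesis using arg_cong[OF r, of "(*) D"] unfolding q1 q2 q3 q4 right_diff_distrib .
qed
lemma Dt_n_Suc2: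
  assumes g: "gen x y M" and kM: "n + k + 2 \<le> M"
  shows "Dt x y n k = Dt x y (Suc n) k * (of_nat n + 2 - of_nat k) * (2*x+of_nat n+of_nat k+2) / ((of_nat n + 1)*(2*x+of_nat n+1))"
proof -
  have n2: "2*x+of_nat n + of_nat k+2 \<noteq> 0" using genD(1)[OF g, of "n+k+2"] kM by (simp add: algebra_simps)
  have n1: "2*x+of_nat n + 1 \<noteq> 0" using genD(1)[OF g, of "n+1"] kM by (simp add: algebra_simps)
  have n5: "(of_nat n + 1::complex) \<noteq> 0" by (rule nz1)
  have e: "(of_nat (Suc n) + 1 - of_nat k :: complex) = of_nat n + 2 - of_nat k" by simp
  from Dt_n_Suc[OF g kM] have "Dt x y (Suc n) k * (of_nat n + 2 - of_nat k) = Dt x y n k * (of_nat n + 1)*(2*x+of_nat n+1)/(2*x+of_nat n+of_nat k+2)"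
    unfolding e .
  then show ?thesis using n1 n2 n5 by (simp add: divide_simps ac_simps)
qed

lemma Dt_Suc2:
  assumes g: "gen x y M" and kM: "n + k + 3 \<le> M"
  shows "Dt x y (Suc n) (Suc k) = Dt x y (Suc n) k * (-(2*x+1+of_nat k)*(2*y+1+of_nat k)*(of_nat n + 2 - of_nat k))
     / ((2*x-2*y+1+of_nat k)*(of_nat k + 1)*(2*x+of_nat n + of_nat k+3))"
proof -
  have kM2: "Suc n + k + 2 \<le> M" using kM by simp
  have e: "(of_nat (Suc n) + 1 - of_nat k :: complex) = of_nat n + 2 - of_nat k" by simp
  have e2: "(2*x+of_nat (Suc n) + of_nat k+2 :: complex) = 2*x+of_nat n + of_nat k+3" by simp
  show ?thesis using Dt_Suc[OF g kM2] unfolding e e2 .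
qed

definition VV :: "complex \<Rightarrow> complex \<Rightarrow> nat \<Rightarrow> complex" where
 "VV x y n = -(Cn x y n)*(2*y+1)/(2*(x+of_nat n+1))"

definition WW :: "complex \<Rightarrow> complex \<Rightarrow> nat \<Rightarrow> nat \<Rightarrow> complex" where
 "WW x y n k = of_nat k*(of_nat k+2*x-2*y)*Dt x y n k / VV x y n"

definition G2 :: "complex \<Rightarrow> complex \<Rightarrow> nat \<Rightarrow> nat \<Rightarrow> complex" where
 "G2 x y n k = -((of_nat k - 1)*(of_nat k - 1 + 2*x-2*y))/(2*(x-2*y+of_nat n)) * (of_nat k*(of_nat k+2*x-2*y))
    * Dt x y (Suc n) k * (2*x+of_nat n+of_nat k+2)/((of_nat n+1)*(2*x+of_nat n+1)*VV x y n)"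

lemma poly2:
  fixes x y N K :: complex
  shows "-2*(x+N+2)*(x+1+N)*(2*x-2*y+1+N)*(N+1) - (-2*(N+2-K)*(2*x+N+K+2)*(x+N+1)*(x-2*y+N))
    = -(x+N+1)*(2*x+1+K)*(2*y+1+K)*(N+2-K) - (K-1)*(K-1+2*x-2*y)*(2*x+N+K+2)*(x+N+1)"
  by (simp add: algebra_simps)

lemma WZ2:
  assumes g: "gen x y M" and kM: "n + k + 3 \<le> M"
  shows "WW x y (Suc n) k - WW x y n k = G2 x y n (Suc k) - G2 x y n k"
proof -
  have n1: "2*x+1+of_nat n \<noteq> 0" using genD(1)[OF g, of "n+1"] kM by (simp add: algebra_simps)
  have n1': "2*x+of_nat n+1 \<noteq> 0" using genD(1)[OF g, of "n+1"] kM by (simp add: algebra_simps)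
  have n2: "2*x+of_nat n + of_nat k+3 \<noteq> 0" using genD(1)[OF g, of "n+k+3"] kM by (simp add: algebra_simps)
  have n3: "x+1+of_nat n \<noteq> 0" using genD(2)[OF g, of "n+1"] kM by (simp add: algebra_simps)
  have n3': "x+of_nat n+1 \<noteq> 0" using genD(2)[OF g, of "n+1"] kM by (simp add: algebra_simps)
  have n3'': "x+of_nat n+2 \<noteq> 0" using genD(2)[OF g, of "n+2"] kM by (simp add: algebra_simps)
  have n4: "2*x-2*y+1+of_nat n \<noteq> 0" using genD(4)[OF g, of "n+1"] kM by (simp add: algebra_simps)
  have n5: "x-2*y+of_nat n \<noteq> 0" using genD(3)[OF g, of "n"] kM by (simp add: algebra_simps)
  have n6: "2*x-2*y+1+of_nat k \<noteq> 0" using genD(4)[OF g, of "Suc k"] kM by (simp add: algebra_simps)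
  have n7: "(of_nat k + 1::complex) \<noteq> 0" "(of_nat n + 1::complex) \<noteq> 0" by (rule nz1)+
  have n5': "2*(x-2*y+of_nat n) \<noteq> 0" using n5 by (simp only: mult_eq_0_iff) simp
  have n8: "2*y+1 \<noteq> 0" using genD(5)[OF g, of 1] kM by simp
  have c: "Cn x y n \<noteq> 0" by (rule Cn_nz[OF g]) (use kM in simp)
  have kM': "n + 2 \<le> M" using kM by simp
  have kM2: "n + k + 2 \<le> M" using kM by simp
  define D where "D = Dt x y (Suc n) k / Cn x y n * (of_nat k*(of_nat k+2*x-2*y)) / ((2*y+1)*(2*x+1+of_nat n)*(x-2*y+of_nat n)*(of_nat n+1))"
  define N where "N = (of_nat n :: complex)"
  define K where "K = (of_nat k :: complex)"
  have es: "x + of_nat (Suc n) + 1 = x + of_nat n + 2" by simp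
  have q1: "WW x y (Suc n) k = D * (-2*(x+N+2)*(x+1+N)*(2*x-2*y+1+N)*(N+1))"
    unfolding WW_def VV_def es Cn_Suc[OF g kM'] D_def N_def K_def
    using n1 n3 n3'' n4 n5 n5' n7 n8 c by (simp add: divide_simps ac_simps) (simp add: algebra_simps)
  have q2: "WW x y n k = D * (-2*(N+2-K)*(2*x+N+K+2)*(x+N+1)*(x-2*y+N))"
    unfolding WW_def VV_def Dt_n_Suc2[OF g kM2] D_def N_def K_def
    using n1 n1' n3' n5 n5' n7 n8 c by (simp add: divide_simps ac_simps) (simp add: algebra_simps)
  have q3: "G2 x y n (Suc k) = D * (-(x+N+1)*(2*x+1+K)*(2*y+1+K)*(N+2-K))"
    unfolding G2_def VV_def Dt_Suc2[OF g kM] D_def N_def K_def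
    using n1 n1' n2 n3' n5 n5' n6 n7 n8 c by (simp add: divide_simps ac_simps) (simp add: algebra_simps)
  have q4: "G2 x y n k = D * ((K-1)*(K-1+2*x-2*y)*(2*x+N+K+2)*(x+N+1))"
    unfolding G2_def VV_def D_def N_def K_def
    using n1 n1' n3' n5 n5' n7 n8 c by (simp add: divide_simps ac_simps) (simp add: algebra_simps)
  show ?thesis using arg_cong[OF poly2[of x N y K], of "(*) D"] unfolding q1 q2 q3 q4 right_diff_distrib .
qed

lemma Dt_zero: "Suc n < k \<Longrightarrow> Dt x y n k = 0"
  unfolding Dt_def by (simp add: binomial_eq_0)

lemma WW_zero: "Suc n < k \<Longrightarrow> WW x y n k = 0"
  unfolding WW_def by (simp add: Dt_zero)

lemma FF_zero: assumes "n < k" shows "FF x y n k = 0"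
proof (cases "k = Suc n")
  case True then show ?thesis unfolding FF_def by simp
next
  case False
  then have "Suc n < k" using assms by simp
  then show ?thesis using Dt_zero[of n k x y] unfolding FF_def by simp
qed

lemma G2_0: "G2 x y n 0 = 0" unfolding G2_def by simp
lemma GG_0: "GG x y n 0 = 0" unfolding GG_def by simp
lemma G2_top: "G2 x y n (n+3) = 0" unfolding G2_def by (simp add: Dt_zero)
lemma GG_top: "GG x y n (n+3) = 0" unfolding GG_def by (simp add: Dt_zero)

lemma WW_base:
  assumes g: "gen x y M" and M: "6 \<le> M"
  shows "(\<Sum>k<2. WW x y 0 k) = 1"
proof -
  have a1: "2*x+1 \<noteq> 0" using genD(1)[OF g, of 1] M by simp
  have a2: "2*x+2 \<noteq> 0" using genD(1)[OF g, of 2] M by simp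
  have a3: "2*x-2*y+1 \<noteq> 0" using genD(4)[OF g, of 1] M by simp
  have a4: "x+1 \<noteq> 0" using genD(2)[OF g, of 1] M by simp
  have a5: "2*y+1 \<noteq> 0" using genD(5)[OF g, of 1] M by simp
  have a5': "-(y*2) \<noteq> 1"
  proof
    assume h: "-(y*2) = 1"
    have "2*y+1 = 2*y + -(y*2)" using h by simp
    then have "2*y+1 = 0" by simp
    with a5 show False by simp
  qed
  have p2: "pochhammer (2*x+1) 2 = (2*x+1)*(2*x+2)"
    by (simp add: numeral_2_eq_2 pochhammer_Suc algebra_simps)
  have "(\<Sum>k<2. WW x y 0 k) = WW x y 0 1" by (simp add: numeral_2_eq_2 WW_def)
  also have "\<dots> = 1"
    unfolding WW_def VV_def Dt_def Phi_def Cn_def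
    using a1 a2 a3 a4 a5 a5' by (simp add: pochhammer_Suc divide_simps) (simp add: algebra_simps)
  finally show ?thesis .
qed

lemma WW_sum:
  assumes g: "gen x y M" and M: "2*n + 6 \<le> M"
  shows "(\<Sum>k<n+2. WW x y n k) = 1"
  using M
proof (induction n)
  case 0
  have "(\<Sum>k<2. WW x y 0 k) = 1" by (rule WW_base[OF g]) (use 0 in simp)
  then show ?case by (metis add_0)
next
  case (Suc n)
  have IH: "(\<Sum>k<n+2. WW x y n k) = 1" using Suc by simp
  have "(\<Sum>k<n+3. WW x y (Suc n) k) = (\<Sum>k<n+3. WW x y (Suc n) k - WW x y n k) + (\<Sum>k<n+3. WW x y n k)"
    by (simp add: sum_subtractf)
  also have "(\<Sum>k<n+3. WW x y (Suc n) k - WW x y n k) = (\<Sum>k<n+3. G2 x y n (Suc k) - G2 x y n k)"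
    by (rule sum.cong) (use WZ2[OF g] Suc.prems in auto)
  also have "\<dots> = 0" by (simp add: sum_lessThan_telescope G2_0 G2_top)
  also have "(\<Sum>k<n+3. WW x y n k) = (\<Sum>k<n+2. WW x y n k)"
  proof -
    have e3: "n+3 = Suc (n+2)" by simp
    have z: "WW x y n (n+2) = 0" by (rule WW_zero) simp
    show ?thesis unfolding e3 sum.lessThan_Suc z by (simp only: add_0_right)
  qed
  finally have r: "(\<Sum>k<n+3. WW x y (Suc n) k) = 1" by (simp only: IH add_0_left)
  have e: "Suc n + 2 = n + 3" by simp
  show ?case unfolding e by (rule r)
qed

lemma H_Suc: "H (Suc k) x = H k x + 1 / (x + of_nat (Suc k))"
  unfolding H_def by simp

lemma abel: "(\<Sum>k<m. (g (Suc k) - g k) * (h k :: complex)) = g m * h m - g 0 * h 0 - (\<Sum>k<m. g (Suc k) * (h (Suc k) - h k))"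
  by (induction m) (simp_all add: algebra_simps)

lemma FF_sum:
  assumes g: "gen x y M" and M: "2*n + 6 \<le> M"
  shows "(\<Sum>k<n+2. FF x y n k * H k x) = (H n x - H n (x-2*y-1)) / 2"
  using M
proof (induction n)
  case 0
  have "(\<Sum>k<2. FF x y 0 k * H k x) = FF x y 0 0 * H 0 x + FF x y 0 1 * H 1 x"
    by (simp add: numeral_2_eq_2)
  then show ?case by (simp add: FF_zero H_def)
next
  case (Suc n)
  have IH: "(\<Sum>k<n+2. FF x y n k * H k x) = (H n x - H n (x-2*y-1)) / 2" using Suc by simp
  have M1: "2*n+6 \<le> M" using Suc.prems by simp
  have nA: "x + of_nat (Suc n) \<noteq> 0" using genD(2)[OF g, of "Suc n"] M1 by simp
  have nB: "x - 2*y - 1 + of_nat (Suc n) \<noteq> 0"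
  proof -
    have e: "x - 2*y - 1 + of_nat (Suc n) = x - 2*y + of_nat n" by simp
    show ?thesis unfolding e using genD(3)[OF g, of n] M1 by simp
  qed
  have nC: "x - 2*y + of_nat n \<noteq> 0" using genD(3)[OF g, of n] M1 by simp
  have c: "Cn x y n \<noteq> 0" by (rule Cn_nz[OF g]) (use M1 in simp)
  define cst where "cst = (2*y+1)/(2*(x+of_nat n+1)*(x-2*y+of_nat n))"
  have step1: "(\<Sum>k<n+3. FF x y (Suc n) k * H k x) = (\<Sum>k<n+3. FF x y n k * H k x) + (\<Sum>k<n+3. (GG x y n (Suc k) - GG x y n k) * H k x)"
  proof -
    have "(\<Sum>k<n+3. FF x y (Suc n) k * H k x) = (\<Sum>k<n+3. FF x y n k * H k x + (GG x y n (Suc k) - GG x y n k) * H k x)"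
    proof (rule sum.cong)
      fix k assume "k \<in> {..<n+3}"
      then have "n + k + 3 \<le> M" using M1 by simp
      from WZ1[OF g this] have "FF x y (Suc n) k = FF x y n k + (GG x y n (Suc k) - GG x y n k)"
        by (simp add: algebra_simps)
      then show "FF x y (Suc n) k * H k x = FF x y n k * H k x + (GG x y n (Suc k) - GG x y n k) * H k x"
        by (metis distrib_right)
    qed simp
    then show ?thesis by (simp add: sum.distrib)
  qed
  have s2: "(\<Sum>k<n+3. FF x y n k * H k x) = (\<Sum>k<n+2. FF x y n k * H k x)"
  proof -
    have e3: "n+3 = Suc (n+2)" by simp
    have z: "FF x y n (n+2) = 0" by (rule FF_zero) simp
    show ?thesis unfolding e3 sum.lessThan_Suc z by (simp only: mult_zero_left add_0_right)
  qed
  have s3: "(\<Sum>k<n+3. (GG x y n (Suc k) - GG x y n k) * H k x) = - (\<Sum>k<n+3. GG x y n (Suc k) / (x + of_nat (Suc k)))"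
    unfolding abel[where g="GG x y n" and m="n+3" and h="\<lambda>k. H k x"] by (simp add: GG_top GG_0 H_Suc H_def)
  have s4: "(\<Sum>k<n+3. GG x y n (Suc k) / (x + of_nat (Suc k))) = (\<Sum>k<n+3. WW x y n (Suc k) * cst)"
  proof (rule sum.cong)
    fix k assume "k \<in> {..<n+3}"
    then have kk: "Suc k \<le> M" using M1 by simp
    have xk: "x + of_nat (Suc k) \<noteq> 0" using genD(2)[OF g kk] .
    have x1: "x + of_nat n + 1 \<noteq> 0" using genD(2)[OF g, of "Suc n"] M1 by (simp add: algebra_simps)
    have y1: "2*y+1 \<noteq> 0" using genD(5)[OF g, of 1] M1 by simp
    have x1': "2*(x+of_nat n+1) \<noteq> 0"
      using x1 by (simp only: mult_eq_0_iff) simp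
    show "GG x y n (Suc k) / (x + of_nat (Suc k)) = WW x y n (Suc k) * cst"
      unfolding GG_def WW_def VV_def cst_def using xk x1 x1' y1 nC c
      by (simp add: divide_simps)
  qed simp
  have s5: "(\<Sum>k<n+3. WW x y n (Suc k)) = 1"
  proof -
    have "(\<Sum>k<Suc (n+3). WW x y n k) = WW x y n 0 + (\<Sum>k<n+3. WW x y n (Suc k))"
      by (rule sum.lessThan_Suc_shift)
    moreover have "(\<Sum>k<Suc (n+3). WW x y n k) = (\<Sum>k<n+2. WW x y n k)"
    proof -
      have e3: "Suc (n+3) = Suc (Suc (n+2))" by simp
      have z: "WW x y n (n+2) = 0" "WW x y n (Suc (n+2)) = 0" by (rule WW_zero, simp)+
      show ?thesis unfolding e3 sum.lessThan_Suc z by (simp only: add_0_right)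
    qed
    moreover have "WW x y n 0 = 0" unfolding WW_def by simp
    ultimately show ?thesis using WW_sum[OF g M1] by simp
  qed
  have e: "Suc n + 2 = n + 3" by simp
  have "(\<Sum>k<n+3. FF x y (Suc n) k * H k x) = (\<Sum>k<n+2. FF x y n k * H k x) - (\<Sum>k<n+3. WW x y n (Suc k)) * cst"
    unfolding step1 s2 s3 s4 sum_distrib_right by (simp only: diff_conv_add_uminus)
  then have "(\<Sum>k<Suc n+2. FF x y (Suc n) k * H k x) = (H n x - H n (x-2*y-1)) / 2 - cst"
    unfolding e IH s5 by simp
  also have "\<dots> = (H (Suc n) x - H (Suc n) (x-2*y-1)) / 2"
  proof -
    have x1: "x + of_nat n + 1 \<noteq> 0" using nA by (simp add: add.commute add.left_commute)
    have x1': "2*(x+of_nat n+1) \<noteq> 0" using x1 by (simp only: mult_eq_0_iff) simp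
    show ?thesis unfolding H_Suc cst_def using nA nB nC x1 x1'
      by (simp add: divide_simps) (simp add: algebra_simps)
  qed
  finally show ?case .
qed

lemma summand_eq:
  assumes g: "gen x y M" and M: "2*n + 6 \<le> M" and kn: "k \<le> n"
  shows "(-1)^k * of_nat (n choose k)
            * (((2*x + of_nat k) gchoose k) * ((2*y + of_nat k) gchoose k))
            / (((2*x + of_nat n + of_nat k) gchoose k) * ((2*x - 2*y + of_nat k) gchoose k))
            * ((1 + 2*x + 2 * of_nat k) / (1 + 2*x + of_nat n + of_nat k))
         = Cn x y n * FF x y n k"
proof -
  have c: "Cn x y n \<noteq> 0" by (rule Cn_nz[OF g]) (use M in simp)
  have p1: "pochhammer (2*x + of_nat n + 1) k \<noteq> 0"
  proof -
    have e: "2*x + of_nat n + 1 = 2*x + of_nat (n+1)" by simp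
    show ?thesis unfolding e by (rule pz(1)[OF g]) (use M kn in simp)
  qed
  have p2: "pochhammer (2*x-2*y+1) k \<noteq> 0" using pz(4)[OF g, of 1 k] M kn by simp
  have a1: "2*x + of_nat n + 1 + of_nat k \<noteq> 0" using genD(1)[OF g, of "n+1+k"] M kn by (simp add: algebra_simps)
  have a2: "1 + 2*x + of_nat n + of_nat k \<noteq> 0" using genD(1)[OF g, of "n+1+k"] M kn by (simp add: algebra_simps)
  have n5: "(of_nat n + 1::complex) \<noteq> 0" by (rule nz1)
  have "Cn x y n * FF x y n k = Dt x y n k * (of_nat n + 1 - of_nat k) * (1 + 2*x + 2*of_nat k)"
    unfolding FF_def using c by simp
  also have "\<dots> = Phi x y k * (of_nat (Suc n choose k) * (of_nat n + 1 - of_nat k)) * fact k * (1 + 2*x + 2*of_nat k)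
      / ((of_nat n + 1) * (pochhammer (2*x + of_nat n + 1) k * (2*x + of_nat n + 1 + of_nat k)))"
    unfolding Dt_def pochhammer_Suc by (simp add: ac_simps)
  also have "\<dots> = Phi x y k * ((of_nat n + 1) * of_nat (n choose k)) * fact k * (1 + 2*x + 2*of_nat k)
      / ((of_nat n + 1) * (pochhammer (2*x + of_nat n + 1) k * (2*x + of_nat n + 1 + of_nat k)))"
    by (simp only: binom_comp)
  also have "\<dots> = (-1)^k * of_nat (n choose k)
            * (((2*x + of_nat k) gchoose k) * ((2*y + of_nat k) gchoose k))
            / (((2*x + of_nat n + of_nat k) gchoose k) * ((2*x - 2*y + of_nat k) gchoose k))
            * ((1 + 2*x + 2 * of_nat k) / (1 + 2*x + of_nat n + of_nat k))"
    unfolding gch Phi_def using p1 p2 a1 a2 n5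
    by (simp add: divide_simps)
  finally show ?thesis by simp
qed

lemma coef_eq:
  assumes g: "gen x y M" and M: "2*n + 6 \<le> M"
  shows "(((2*x + of_nat n) gchoose n) * ((x - 2*y - 1 + of_nat n) gchoose n))
             / (((x + of_nat n) gchoose n) * ((2*x - 2*y + of_nat n) gchoose n)) = Cn x y n"
proof -
  have n3: "pochhammer (x+1) n \<noteq> 0" using pz(2)[OF g, of 1 n] M by simp
  have n4: "pochhammer (2*x-2*y+1) n \<noteq> 0" using pz(4)[OF g, of 1 n] M by simp
  have e: "x - 2*y - 1 + 1 = x - 2*y" by simp
  show ?thesis unfolding gch e Cn_def using n3 n4 by (simp add: divide_simps)
qed

lemma generic:
  assumes g: "gen x y M" and M: "2*n + 6 \<le> M"
  shows "(\<Sum>k=0..n. (-1)^k * of_nat (n choose k)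
            * (((2*x + of_nat k) gchoose k) * ((2*y + of_nat k) gchoose k))
            / (((2*x + of_nat n + of_nat k) gchoose k) * ((2*x - 2*y + of_nat k) gchoose k))
            * ((1 + 2*x + 2 * of_nat k) / (1 + 2*x + of_nat n + of_nat k))
            * H k x)
       = 1/2 * (((2*x + of_nat n) gchoose n) * ((x - 2*y - 1 + of_nat n) gchoose n))
             / (((x + of_nat n) gchoose n) * ((2*x - 2*y + of_nat n) gchoose n))
             * (H n x - H n (x - 2*y - 1))"
proof -
  have "(\<Sum>k=0..n. (-1)^k * of_nat (n choose k)
            * (((2*x + of_nat k) gchoose k) * ((2*y + of_nat k) gchoose k))
            / (((2*x + of_nat n + of_nat k) gchoose k) * ((2*x - 2*y + of_nat k) gchoose k))
            * ((1 + 2*x + 2 * of_nat k) / (1 + 2*x + of_nat n + of_nat k))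
            * H k x) = (\<Sum>k=0..n. Cn x y n * (FF x y n k * H k x))"
  proof (rule sum.cong)
    fix k assume "k \<in> {0..n}"
    then have "k \<le> n" by simp
    from summand_eq[OF g M this] show "(-1)^k * of_nat (n choose k)
            * (((2*x + of_nat k) gchoose k) * ((2*y + of_nat k) gchoose k))
            / (((2*x + of_nat n + of_nat k) gchoose k) * ((2*x - 2*y + of_nat k) gchoose k))
            * ((1 + 2*x + 2 * of_nat k) / (1 + 2*x + of_nat n + of_nat k))
            * H k x = Cn x y n * (FF x y n k * H k x)" by simp
  qed simp
  also have "\<dots> = Cn x y n * (\<Sum>k<n+2. FF x y n k * H k x)"
  proof -
    have e1: "{0..n} = {..<Suc n}" by auto
    have e2: "n + 2 = Suc (Suc n)" by simp
    have z: "FF x y n (Suc n) = 0" by (rule FF_zero) simp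
    show ?thesis unfolding e1 e2 sum.lessThan_Suc[of _ "Suc n"] z by (simp add: sum_distrib_left distrib_left)
  qed
  also have "\<dots> = Cn x y n * ((H n x - H n (x-2*y-1)) / 2)" unfolding FF_sum[OF g M] ..
  also have "\<dots> = 1/2 * Cn x y n * (H n x - H n (x - 2*y - 1))" by simp
  also have "\<dots> = 1/2 * ((((2*x + of_nat n) gchoose n) * ((x - 2*y - 1 + of_nat n) gchoose n)) / (((x + of_nat n) gchoose n) * ((2*x - 2*y + of_nat n) gchoose n))) * (H n x - H n (x - 2*y - 1))"
    by (simp only: coef_eq[OF g M])
  also have "\<dots> = 1/2 * (((2*x + of_nat n) gchoose n) * ((x - 2*y - 1 + of_nat n) gchoose n))
             / (((x + of_nat n) gchoose n) * ((2*x - 2*y + of_nat n) gchoose n))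
             * (H n x - H n (x - 2*y - 1))" by simp
  finally show ?thesis .
qed

lemma isCont_gchoose[continuous_intros]:
  fixes f :: "complex \<Rightarrow> complex"
  shows "isCont f a \<Longrightarrow> isCont (\<lambda>t. f t gchoose k) a"
  unfolding gbinomial_prod_rev by (intro continuous_intros) auto

lemma isCont_H[continuous_intros]:
  fixes f :: "complex \<Rightarrow> complex"
  shows "isCont f a \<Longrightarrow> (\<And>j. 1 \<le> j \<Longrightarrow> j \<le> m \<Longrightarrow> f a + of_nat j \<noteq> 0) \<Longrightarrow> isCont (\<lambda>t. H m (f t)) a"
  unfolding H_def by (intro continuous_intros) auto

lemma ev_lin:
  fixes w c :: complex
  assumes w: "w \<noteq> 0" and f: "\<And>t. f t = c + w*t"
  shows "eventually (\<lambda>t. f t \<noteq> 0) (at 0)"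
proof (cases "c = 0")
  case True
  then show ?thesis unfolding f using w by (auto simp: eventually_at_filter)
next
  case False
  have "eventually (\<lambda>t. t \<noteq> -c/w) (at 0)"
  proof -
    have "(-c/w) \<noteq> 0" using False w by simp
    then have "eventually (\<lambda>t. t \<noteq> -c/w) (nhds 0)"
      by (intro t1_space_nhds) simp
    then show ?thesis unfolding eventually_at_filter by (rule eventually_mono) auto
  qed
  then show ?thesis
  proof (rule eventually_mono)
    fix t assume "t \<noteq> -c/w"
    show "f t \<noteq> 0" unfolding f
    proof
      assume "c + w*t = 0"
      then have "t = -c/w" using w by (simp add: field_simps add_eq_0_iff)
      with \<open>t \<noteq> -c/w\<close> show False by simp
    qed
  qed
qed

lemma ev_gen: "eventually (\<lambda>t. gen (x+t) (y+3*t) M) (at 0)"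
proof -
  have "eventually (\<lambda>t. \<forall>j\<in>{..M}. 2*(x+t) + of_nat j \<noteq> 0 \<and> (x+t) + of_nat j \<noteq> 0 \<and> (x+t) - 2*(y+3*t) + of_nat j \<noteq> 0
     \<and> 2*(x+t) - 2*(y+3*t) + of_nat j \<noteq> 0 \<and> 2*(y+3*t) + of_nat j \<noteq> 0) (at 0)"
  proof (rule eventually_ball_finite)
    show "finite {..M}" by simp
    show "\<forall>j\<in>{..M}. eventually (\<lambda>t. 2*(x+t) + of_nat j \<noteq> 0 \<and> (x+t) + of_nat j \<noteq> 0 \<and> (x+t) - 2*(y+3*t) + of_nat j \<noteq> 0
     \<and> 2*(x+t) - 2*(y+3*t) + of_nat j \<noteq> 0 \<and> 2*(y+3*t) + of_nat j \<noteq> 0) (at 0)"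
    proof
      fix j :: nat
      have e1: "eventually (\<lambda>t. 2*(x+t) + of_nat j \<noteq> 0) (at 0)"
        by (rule ev_lin[of 2 _ "2*x + of_nat j"]) (simp_all add: algebra_simps)
      have e2: "eventually (\<lambda>t. (x+t) + of_nat j \<noteq> 0) (at 0)"
        by (rule ev_lin[of 1 _ "x + of_nat j"]) (simp_all add: algebra_simps)
      have e3: "eventually (\<lambda>t. (x+t) - 2*(y+3*t) + of_nat j \<noteq> 0) (at 0)"
        by (rule ev_lin[of "-5" _ "x - 2*y + of_nat j"]) (simp_all add: algebra_simps)
      have e4: "eventually (\<lambda>t. 2*(x+t) - 2*(y+3*t) + of_nat j \<noteq> 0) (at 0)"
        by (rule ev_lin[of "-4" _ "2*x - 2*y + of_nat j"]) (simp_all add: algebra_simps)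
      have e5: "eventually (\<lambda>t. 2*(y+3*t) + of_nat j \<noteq> 0) (at 0)"
        by (rule ev_lin[of 6 _ "2*y + of_nat j"]) (simp_all add: algebra_simps)
      show "eventually (\<lambda>t. 2*(x+t) + of_nat j \<noteq> 0 \<and> (x+t) + of_nat j \<noteq> 0 \<and> (x+t) - 2*(y+3*t) + of_nat j \<noteq> 0
         \<and> 2*(x+t) - 2*(y+3*t) + of_nat j \<noteq> 0 \<and> 2*(y+3*t) + of_nat j \<noteq> 0) (at 0)"
        using e1 e2 e3 e4 e5 by (intro eventually_conj)
    qed
  qed
  then show ?thesis unfolding gen_def by (rule eventually_mono) auto
qed

theorem theorem5:
  fixes n :: nat and x y :: complex
  assumes d1: "\<And>k. k \<le> n \<Longrightarrow> (2*x + of_nat n + of_nat k) gchoose k \<noteq> 0"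
      and d2: "\<And>k. k \<le> n \<Longrightarrow> (2*x - 2*y + of_nat k) gchoose k \<noteq> 0"
      and d3: "\<And>k. k \<le> n \<Longrightarrow> 1 + 2*x + of_nat n + of_nat k \<noteq> 0"
      and d4: "\<And>j. 1 \<le> j \<Longrightarrow> j \<le> n \<Longrightarrow> x + of_nat j \<noteq> 0"
      and d5: "\<And>j. 1 \<le> j \<Longrightarrow> j \<le> n \<Longrightarrow> x - 2*y - 1 + of_nat j \<noteq> 0"
      and d6: "(x + of_nat n) gchoose n \<noteq> 0"
  shows "(\<Sum>k=0..n. (-1)^k * of_nat (n choose k)
            * (((2*x + of_nat k) gchoose k) * ((2*y + of_nat k) gchoose k))
            / (((2*x + of_nat n + of_nat k) gchoose k) * ((2*x - 2*y + of_nat k) gchoose k))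
            * ((1 + 2*x + 2 * of_nat k) / (1 + 2*x + of_nat n + of_nat k))
            * H k x)
       = 1/2 * (((2*x + of_nat n) gchoose n) * ((x - 2*y - 1 + of_nat n) gchoose n))
             / (((x + of_nat n) gchoose n) * ((2*x - 2*y + of_nat n) gchoose n))
             * (H n x - H n (x - 2*y - 1))"
proof -
  define SL where "SL = (\<lambda>a b::complex. (\<Sum>k=0..n. (-1)^k * of_nat (n choose k)
            * (((2*a + of_nat k) gchoose k) * ((2*b + of_nat k) gchoose k))
            / (((2*a + of_nat n + of_nat k) gchoose k) * ((2*a - 2*b + of_nat k) gchoose k))
            * ((1 + 2*a + 2 * of_nat k) / (1 + 2*a + of_nat n + of_nat k))
            * H k a))"
  define SR where "SR = (\<lambda>a b::complex. 1/2 * (((2*a + of_nat n) gchoose n) * ((a - 2*b - 1 + of_nat n) gchoose n))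
             / (((a + of_nat n) gchoose n) * ((2*a - 2*b + of_nat n) gchoose n))
             * (H n a - H n (a - 2*b - 1)))"
  have ev: "eventually (\<lambda>t. SL (x+t) (y+3*t) = SR (x+t) (y+3*t)) (at 0)"
    using ev_gen[of x y "2*n+6"]
  proof (rule eventually_mono)
    fix t assume "gen (x+t) (y+3*t) (2*n+6)"
    from generic[OF this] show "SL (x+t) (y+3*t) = SR (x+t) (y+3*t)" unfolding SL_def SR_def by simp
  qed
  have cL: "isCont (\<lambda>t. SL (x+t) (y+3*t)) 0"
    unfolding SL_def by (intro continuous_intros) (auto simp: d1 d2 d3 d4)
  have cR: "isCont (\<lambda>t. SR (x+t) (y+3*t)) 0"
    unfolding SR_def by (intro continuous_intros) (auto simp: d2 d4 d5 d6)
  have lL: "((\<lambda>t. SL (x+t) (y+3*t)) \<longlongrightarrow> SL x y) (at 0)"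
    using cL unfolding isCont_def by simp
  have lR: "((\<lambda>t. SR (x+t) (y+3*t)) \<longlongrightarrow> SR x y) (at 0)"
    using cR unfolding isCont_def by simp
  have lR': "((\<lambda>t. SR (x+t) (y+3*t)) \<longlongrightarrow> SL x y) (at 0)"
    using lL tendsto_cong[OF ev] by simp
  have "SL x y = SR x y" using LIM_unique[OF lR' lR] .
  then show ?thesis unfolding SL_def SR_def by simp
qed

end
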